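(* Let $A$ be a random variable with values in $\{u,v\}$, $\mathbb{P}(A=u)=p_u$, $\mathbb{P}(A=v)=p_v$, $p_u+p_v=1$, and let $(U,V)$ be a random vector independent of $A$ that is bivariate normal with $\mathbb{E}[U]=\mathbb{E}[V]=\mu<0$, $\operatorname{Var}(U)=\operatorname{Var}(V)=\sigma^2$ with $\sigma>0$, and correlation $\rho$. Let $D=\mathbb{I}(A=u,\,U>0)+\mathbb{I}(A=v,\,V>0)$. If \[-1\le \rho< 2\left(\frac{-\mu}{\sigma}\right)M\left(\frac{-\mu}{\sigma}\right)-1,\] then $\mathbb{E}[D(U+V)]<0$.
   Context: $\phi$ and $\Phi$ denote the standard normal density and distribution function, and $M(\alpha)=(1-\Phi(\alpha))/\phi(\alpha)$ is the Mills ratio. Interpretation: in each period a firm picks a primary dimension $A$, observes only the effect of an innovation on that dimension, and adopts it ($D=1$) iff that effect is positive; $\mathbb{E}[D(U+V)]$ is the almost-sure long-run average of the firm's overall performance when $(a_t)$ and $(u_t,v_t)$ are i.i.d. copies of $A$ and $(U,V)$, independent of each other. *)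

theory Defs
  imports "HOL-Probability.Probability"
begin

definition std_normal_measure :: "real measure" where
  "std_normal_measure = density lborel std_normal_density"

definition Phi :: "real \<Rightarrow> real" where
  "Phi x = measure std_normal_measure {..x}"

definition mills_ratio :: "real \<Rightarrow> real" where
  "mills_ratio a = (1 - Phi a) / std_normal_density a"

text \<open>Bivariate normal law with common mean mu, common variance sd^2 and
correlation rho (-1 \<le> rho \<le> 1, degenerate cases included): the law of the affine
image (mu + sd Z1, mu + sd (rho Z1 + sqrt(1 - rho^2) Z2)) of a pair of
independent standard normals Z1, Z2.\<close>

definition bivariate_normal_law :: "real \<Rightarrow> real \<Rightarrow> real \<Rightarrow> (real \<times> real) measure" where
  "bivariate_normal_law mu sd rho =
     distr (std_normal_measure \<Otimes>\<^sub>M std_normal_measure) borel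
       (\<lambda>(z1, z2). (mu + sd * z1, mu + sd * (rho * z1 + sqrt (1 - rho\<^sup>2) * z2)))"

end

theory Submission
  imports Defs "HOL-Real_Asymp.Real_Asymp"
begin

abbreviation "NN \<equiv> std_normal_measure"

lemma NN_prob: "prob_space NN"
  unfolding std_normal_measure_def by (rule prob_space_normal_density) simp

lemma sets_NN[simp, measurable_cong]: "sets NN = sets borel"
  unfolding std_normal_measure_def by simp

lemma space_NN[simp]: "space NN = UNIV"
  unfolding std_normal_measure_def by simp

lemma integral_NN:
  assumes [measurable]: "f \<in> borel_measurable borel"
  shows "integral\<^sup>L NN f = (\<integral>x. std_normal_density x * f x \<partial>lborel)"
  unfolding std_normal_measure_def
  by (subst integral_density) auto

lemma integrable_NN:
  assumes [measurable]: "f \<in> borel_measurable borel"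
  shows "integrable NN f \<longleftrightarrow> integrable lborel (\<lambda>x. std_normal_density x * f x)"
  unfolding std_normal_measure_def
  by (subst integrable_density) auto

lemma phi_deriv: "((\<lambda>x. - std_normal_density x) has_real_derivative (x * std_normal_density x)) (at x)"
proof -
  have s: "sqrt (2 * pi) * sqrt (2 * pi) = 2 * pi" by simp
  show ?thesis
  unfolding std_normal_density_def
  by (auto intro!: derivative_eq_intros simp: field_simps s)
qed

lemma phi_lim_top: "((\<lambda>x. - std_normal_density x) \<longlongrightarrow> 0) at_top"
  unfolding std_normal_density_def by real_asymp

lemma phi_lim_bot: "((\<lambda>x. - std_normal_density x) \<longlongrightarrow> 0) at_bot"
proof -
  have "((\<lambda>x. - std_normal_density (-x)) \<longlongrightarrow> 0) at_top"
    using phi_lim_top unfolding std_normal_density_def by simp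
  then show ?thesis
    by (simp add: at_bot_mirror filterlim_filtermap)
qed

lemma integrable_x_phi: "integrable lborel (\<lambda>x. std_normal_density x * x)"
  by (rule integrable_normal_moment_nz_1) simp

lemma integrable_x_phi2: "integrable lborel (\<lambda>x. x * std_normal_density x)"
  using integrable_x_phi by (simp add: mult.commute)

lemma NN_ind_x:
  "integral\<^sup>L NN (\<lambda>z. indicator {c<..} z * z) = std_normal_density c"
proof -
  have "integral\<^sup>L NN (\<lambda>z. indicator {c<..} z * z) = (LBINT x:{c<..}. x * std_normal_density x)"
    by (subst integral_NN) (auto simp: set_lebesgue_integral_def intro!: Bochner_Integration.integral_cong split: split_indicator)
  also have "\<dots> = (LBINT x=ereal c..\<infinity>. x * std_normal_density x)"
    by (rule interval_integral_to_infinity_eq[symmetric])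
  also have "\<dots> = 0 - (- std_normal_density c)"
  proof (rule interval_integral_FTC_integrable[where F="\<lambda>x. - std_normal_density x"])
    show "ereal c < \<infinity>" by simp
    show "((\<lambda>x. - std_normal_density x) has_vector_derivative x * std_normal_density x) (at x)" for x
      using phi_deriv by (simp add: has_real_derivative_iff_has_vector_derivative)
    show "isCont (\<lambda>x. x * std_normal_density x) x" for x
      unfolding std_normal_density_def by (intro continuous_intros) auto
    show "set_integrable lborel (einterval (ereal c) \<infinity>) (\<lambda>x. x * std_normal_density x)"
      unfolding set_integrable_def
      by (rule integrable_mult_indicator) (auto intro: integrable_x_phi2)
    show "(((\<lambda>x. - std_normal_density x) \<circ> real_of_ereal) \<longlongrightarrow> - std_normal_density c) (at_right (ereal c))"
      unfolding ereal_tendsto_simps std_normal_density_def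
      by (intro tendsto_intros) auto
    show "(((\<lambda>x. - std_normal_density x) \<circ> real_of_ereal) \<longlongrightarrow> 0) (at_left \<infinity>)"
      unfolding ereal_tendsto_simps by (rule phi_lim_top)
  qed
  finally show ?thesis by simp
qed

lemma NN_ind_x_left:
  "integral\<^sup>L NN (\<lambda>z. indicator {..<c} z * z) = - std_normal_density c"
proof -
  have "integral\<^sup>L NN (\<lambda>z. indicator {..<c} z * z) = (LBINT x:{..<c}. x * std_normal_density x)"
    by (subst integral_NN) (auto simp: set_lebesgue_integral_def intro!: Bochner_Integration.integral_cong split: split_indicator)
  also have "\<dots> = (LBINT x=-\<infinity>..ereal c. x * std_normal_density x)"
    by (simp add: interval_lebesgue_integral_def einterval_def lessThan_def)
  also have "\<dots> = (- std_normal_density c) - 0"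
  proof (rule interval_integral_FTC_integrable[where F="\<lambda>x. - std_normal_density x"])
    show "-\<infinity> < ereal c" by simp
    show "((\<lambda>x. - std_normal_density x) has_vector_derivative x * std_normal_density x) (at x)" for x
      using phi_deriv by (simp add: has_real_derivative_iff_has_vector_derivative)
    show "isCont (\<lambda>x. x * std_normal_density x) x" for x
      unfolding std_normal_density_def by (intro continuous_intros) auto
    show "set_integrable lborel (einterval (-\<infinity>) (ereal c)) (\<lambda>x. x * std_normal_density x)"
      unfolding set_integrable_def
      by (rule integrable_mult_indicator) (auto intro: integrable_x_phi2)
    show "(((\<lambda>x. - std_normal_density x) \<circ> real_of_ereal) \<longlongrightarrow> - std_normal_density c) (at_left (ereal c))"
      unfolding ereal_tendsto_simps std_normal_density_def
      by (intro tendsto_intros) auto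
    show "(((\<lambda>x. - std_normal_density x) \<circ> real_of_ereal) \<longlongrightarrow> 0) (at_right (-\<infinity>))"
      unfolding ereal_tendsto_simps by (rule phi_lim_bot)
  qed
  finally show ?thesis by simp
qed

lemma NN_ind: "integral\<^sup>L NN (indicator {c<..} :: real \<Rightarrow> real) = 1 - Phi c"
proof -
  interpret prob_space NN by (rule NN_prob)
  have "integral\<^sup>L NN (indicator {c<..} :: real \<Rightarrow> real) = prob {c<..}"
    by simp
  also have "prob {c<..} = 1 - prob {..c}"
  proof -
    have "{c<..} = space NN - {..c}" by auto
    then show ?thesis using prob_compl[of "{..c}"] by simp
  qed
  finally show ?thesis by (simp add: Phi_def)
qed

lemma integrable_NN_x: "integrable NN (\<lambda>z. z)"
  by (subst integrable_NN) (auto intro: integrable_x_phi)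

lemma integrable_NN_abs: "integrable NN (\<lambda>z. \<bar>z\<bar>)"
  using integrable_NN_x by (rule integrable_abs)

lemma NN_x: "integral\<^sup>L NN (\<lambda>z. z) = 0"
  by (subst integral_NN) (auto simp: integral_normal_moment_nz_1)

lemma NN_gauss:
  assumes "r \<noteq> 0" "r\<^sup>2 + s\<^sup>2 = 1"
  shows "integral\<^sup>L NN (\<lambda>t. std_normal_density ((a - s * t) / r)) = \<bar>r\<bar> * std_normal_density a"
proof -
  have eq: "std_normal_density t * std_normal_density ((a - s * t) / r)
      = \<bar>r\<bar> * std_normal_density a * normal_density (s * a) \<bar>r\<bar> t" for t
  proof -
    have e: "- t\<^sup>2 / 2 + - ((a - s * t) / r)\<^sup>2 / 2 = - a\<^sup>2 / 2 + - (t - s * a)\<^sup>2 / (2 * \<bar>r\<bar>\<^sup>2)"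
      using assms by (simp add: field_simps power2_eq_square) algebra
    have "std_normal_density t * std_normal_density ((a - s * t) / r)
        = (1 / sqrt (2 * pi)) * (1 / sqrt (2 * pi)) * exp (- t\<^sup>2 / 2 + - ((a - s * t) / r)\<^sup>2 / 2)"
      unfolding std_normal_density_def by (simp add: mult_exp_exp)
    also have "\<dots> = (1 / sqrt (2 * pi)) * (1 / sqrt (2 * pi)) * exp (- a\<^sup>2 / 2 + - (t - s * a)\<^sup>2 / (2 * \<bar>r\<bar>\<^sup>2))"
      by (simp only: e)
    also have "\<dots> = \<bar>r\<bar> * std_normal_density a * normal_density (s * a) \<bar>r\<bar> t"
    proof -
      have q: "sqrt (2 * pi * \<bar>r\<bar>\<^sup>2) = \<bar>r\<bar> * sqrt (2 * pi)"
        by (simp add: real_sqrt_mult)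
      show ?thesis
        unfolding std_normal_density_def normal_density_def q
        by (subst exp_add) (use assms(1) in \<open>simp add: field_simps\<close>)
    qed
    finally show ?thesis .
  qed
  have "integral\<^sup>L NN (\<lambda>t. std_normal_density ((a - s * t) / r))
      = (\<integral>t. \<bar>r\<bar> * std_normal_density a * normal_density (s * a) \<bar>r\<bar> t \<partial>lborel)"
    by (subst integral_NN) (auto simp: eq)
  also have "\<dots> = \<bar>r\<bar> * std_normal_density a"
    using integral_normal_density[of "\<bar>r\<bar>" "s * a"] assms(1) by simp
  finally show ?thesis .
qed

abbreviation "PP \<equiv> NN \<Otimes>\<^sub>M NN"

lemma PP_pair: "pair_prob_space NN NN"
  by (simp add: NN_prob pair_prob_space.intro pair_sigma_finite_def prob_space_imp_sigma_finite)

lemma PP_prob: "prob_space PP"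
proof -
  interpret pair_prob_space NN NN by (rule PP_pair)
  show ?thesis by (rule P.prob_space_axioms)
qed

lemma prod_integrable:
  assumes f: "integrable NN f" and g: "integrable NN g"
  shows "integrable PP (\<lambda>z. f (fst z) * g (snd z) :: real)"
proof -
  interpret pair_prob_space NN NN by (rule PP_pair)
  have [measurable]: "f \<in> borel_measurable NN" "g \<in> borel_measurable NN"
    using f g by auto
  show ?thesis
  proof (rule Fubini_integrable)
    show "(\<lambda>z. f (fst z) * g (snd z)) \<in> borel_measurable PP" by measurable
    have "integrable NN (\<lambda>x. \<bar>f x\<bar> * (\<integral>y. \<bar>g y\<bar> \<partial>NN))"
      using f by (intro integrable_mult_left) auto
    then show "integrable NN (\<lambda>x. \<integral>y. norm (f (fst (x, y)) * g (snd (x, y))) \<partial>NN)"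
      by (simp add: abs_mult)
    show "AE x in NN. integrable NN (\<lambda>y. f (fst (x, y)) * g (snd (x, y)))"
      using g by (auto intro!: integrable_mult_right)
  qed
qed

lemma prod_integral:
  assumes f: "integrable NN f" and g: "integrable NN g"
  shows "integral\<^sup>L PP (\<lambda>z. f (fst z) * g (snd z) :: real) = integral\<^sup>L NN f * integral\<^sup>L NN g"
proof -
  interpret pair_prob_space NN NN by (rule PP_pair)
  have "integral\<^sup>L PP (\<lambda>z. f (fst z) * g (snd z)) = (\<integral>x. (\<integral>y. f x * g y \<partial>NN) \<partial>NN)"
    using integral_fst'[OF prod_integrable[OF f g]] by simp
  also have "\<dots> = (\<integral>x. f x * integral\<^sup>L NN g \<partial>NN)"
    by simp
  also have "\<dots> = integral\<^sup>L NN f * integral\<^sup>L NN g"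
    by simp
  finally show ?thesis .
qed

lemma distr_PP_fst: "distr PP NN fst = NN"
proof -
  interpret prob_space NN by (rule NN_prob)
  show ?thesis by (rule distr_pair_fst)
qed

lemma distr_PP_snd: "distr PP NN snd = NN"
proof -
  interpret pair_prob_space NN NN by (rule PP_pair)
  have "distr PP NN snd = distr (distr PP PP (\<lambda>(x, y). (y, x))) NN snd"
    by (subst distr_pair_swap[symmetric]) simp
  also have "\<dots> = distr PP NN (\<lambda>z. snd (case z of (x, y) \<Rightarrow> (y, x)))"
    by (subst distr_distr) (auto simp: comp_def)
  also have "\<dots> = distr PP NN fst"
    by (rule distr_cong) auto
  finally show ?thesis using distr_PP_fst by simp
qed

lemma distributed_fst: "distributed PP lborel fst std_normal_density"
proof -
  have "distr PP lborel fst = distr PP NN fst"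
    by (rule distr_cong) auto
  then show ?thesis
    unfolding distributed_def using distr_PP_fst
    by (auto simp: std_normal_measure_def)
qed

lemma distributed_snd: "distributed PP lborel snd std_normal_density"
proof -
  have "distr PP lborel snd = distr PP NN snd"
    by (rule distr_cong) auto
  then show ?thesis
    unfolding distributed_def using distr_PP_snd
    by (auto simp: std_normal_measure_def)
qed

lemma indep_fst_snd: "prob_space.indep_var PP borel fst borel snd"
proof -
  interpret P: prob_space PP by (rule PP_prob)
  have 1: "distr PP borel fst = NN"
  proof -
    have "distr PP borel fst = distr PP NN fst" by (rule distr_cong) auto
    then show ?thesis using distr_PP_fst by simp
  qed
  have 2: "distr PP borel snd = NN"
  proof -
    have "distr PP borel snd = distr PP NN snd" by (rule distr_cong) auto
    then show ?thesis using distr_PP_snd by simp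
  qed
  have 3: "distr PP (borel \<Otimes>\<^sub>M borel) (\<lambda>x. (fst x, snd x)) = PP"
  proof -
    have "distr PP (borel \<Otimes>\<^sub>M borel) (\<lambda>x. (fst x, snd x)) = distr PP PP (\<lambda>x. x)"
    proof (rule distr_cong)
      show "sets (borel \<Otimes>\<^sub>M borel) = sets PP"
        by (intro sets_pair_measure_cong) simp_all
    qed auto
    also have "\<dots> = PP"
      by (rule distr_id)
    finally show ?thesis .
  qed
  have mc: "measurable PP NN = measurable PP borel"
    by (rule measurable_cong_sets) simp_all
  have m1: "fst \<in> measurable PP borel"
    using measurable_fst[of NN NN] unfolding mc .
  have m2: "snd \<in> measurable PP borel"
    using measurable_snd[of NN NN] unfolding mc .
  have "distr PP borel fst \<Otimes>\<^sub>M distr PP borel snd = distr PP (borel \<Otimes>\<^sub>M borel) (\<lambda>x. (fst x, snd x))"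
    unfolding 1 2 3 ..
  then show ?thesis
    using P.indep_var_distribution_eq m1 m2 by blast
qed

lemma distributed_W:
  assumes "r\<^sup>2 + s\<^sup>2 = 1"
  shows "distributed PP lborel (\<lambda>z. r * fst z + s * snd z) std_normal_density"
proof -
  interpret P: prob_space PP by (rule PP_prob)
  have aff: "c \<noteq> 0 \<Longrightarrow> distributed PP lborel X std_normal_density \<Longrightarrow>
      distributed PP lborel (\<lambda>z. c * X z) (normal_density 0 \<bar>c\<bar>)" for c X
    using P.normal_density_affine[of X 0 1 c 0] by simp
  show ?thesis
  proof (cases "r = 0")
    case True
    then have s1: "\<bar>s\<bar> = 1" using assms by (simp add: abs_square_eq_1)
    then have "s \<noteq> 0" by auto
    have "distributed PP lborel (\<lambda>z. s * snd z) (normal_density 0 \<bar>s\<bar>)"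
      by (rule aff[OF \<open>s \<noteq> 0\<close> distributed_snd])
    then show ?thesis by (simp add: True s1)
  next
    case r: False
    show ?thesis
    proof (cases "s = 0")
      case True
      then have r1: "\<bar>r\<bar> = 1" using assms by (simp add: abs_square_eq_1)
      have "distributed PP lborel (\<lambda>z. r * fst z) (normal_density 0 \<bar>r\<bar>)"
        by (rule aff[OF r distributed_fst])
      then show ?thesis by (simp add: True r1)
    next
      case s: False
      have ind: "P.indep_var borel (\<lambda>z. r * fst z) borel (\<lambda>z. s * snd z)"
        using P.indep_var_compose[OF indep_fst_snd, of "\<lambda>x. r * x" borel "\<lambda>x. s * x" borel]
        by (simp add: comp_def)
      have d1: "distributed PP lborel (\<lambda>z. r * fst z) (normal_density 0 \<bar>r\<bar>)"
        by (rule aff[OF r distributed_fst])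
      have d2: "distributed PP lborel (\<lambda>z. s * snd z) (normal_density 0 \<bar>s\<bar>)"
        by (rule aff[OF s distributed_snd])
      have "distributed PP lborel (\<lambda>z. r * fst z + s * snd z)
          (normal_density (0 + 0) (sqrt (\<bar>r\<bar>\<^sup>2 + \<bar>s\<bar>\<^sup>2)))"
        by (rule P.add_indep_normal[OF ind _ _ d1 d2]) (use r s in auto)
      then show ?thesis using assms by simp
    qed
  qed
qed

lemma integrable_NN_ind: "integrable NN (indicator {c<..} :: real \<Rightarrow> real)"
proof -
  interpret prob_space NN by (rule NN_prob)
  show ?thesis by (rule integrable_real_indicator) (auto simp: less_top[symmetric])
qed

lemma integrable_NN_ind_x: "integrable NN (\<lambda>z. indicator {c<..} z * z :: real)"
  using integrable_mult_indicator[of "{c<..}" NN "\<lambda>z. z", OF _ integrable_NN_x] by simp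

lemma integrable_NN_ind_x_left: "integrable NN (\<lambda>z. indicator {..<c} z * z :: real)"
  using integrable_mult_indicator[of "{..<c}" NN "\<lambda>z. z", OF _ integrable_NN_x] by simp

lemma integrable_NN_one: "integrable NN (\<lambda>z. 1 :: real)"
proof -
  interpret prob_space NN by (rule NN_prob)
  show ?thesis by simp
qed

lemma NN_one: "integral\<^sup>L NN (\<lambda>z. 1 :: real) = 1"
proof -
  interpret prob_space NN by (rule NN_prob)
  show ?thesis using prob_space by simp
qed

lemma integrable_PP_fst_abs: "integrable PP (\<lambda>z. \<bar>fst z\<bar>)"
  using prod_integrable[OF integrable_NN_abs integrable_NN_one] by simp

lemma integrable_PP_snd_abs: "integrable PP (\<lambda>z. \<bar>snd z\<bar>)"
  using prod_integrable[OF integrable_NN_one integrable_NN_abs] by simp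

lemma integrable_PP_one: "integrable PP (\<lambda>z. 1 :: real)"
  using prod_integrable[OF integrable_NN_one integrable_NN_one] by simp

lemma law_W_integral:
  fixes g :: "real \<Rightarrow> real"
  assumes "r\<^sup>2 + s\<^sup>2 = 1" and [measurable]: "g \<in> borel_measurable borel"
  shows "integral\<^sup>L PP (\<lambda>z. g (r * fst z + s * snd z)) = integral\<^sup>L NN g"
proof -
  have d: "distr PP lborel (\<lambda>z. r * fst z + s * snd z) = NN"
    using distributed_W[OF assms(1)] unfolding distributed_def std_normal_measure_def by simp
  have "integral\<^sup>L PP (\<lambda>z. g (r * fst z + s * snd z)) = integral\<^sup>L (distr PP lborel (\<lambda>z. r * fst z + s * snd z)) g"
  proof -
    have "(\<lambda>z. r * fst z + s * snd z) \<in> borel_measurable PP" by measurable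
    then have m: "(\<lambda>z. r * fst z + s * snd z) \<in> measurable PP lborel" by simp
    have g': "g \<in> borel_measurable lborel" using assms(2) by simp
    show ?thesis using integral_distr[OF m g'] by simp
  qed
  then show ?thesis using d by simp
qed

lemma law_W_integrable:
  fixes g :: "real \<Rightarrow> real"
  assumes "r\<^sup>2 + s\<^sup>2 = 1" and [measurable]: "g \<in> borel_measurable borel" and "integrable NN g"
  shows "integrable PP (\<lambda>z. g (r * fst z + s * snd z))"
proof -
  have d: "distr PP lborel (\<lambda>z. r * fst z + s * snd z) = NN"
    using distributed_W[OF assms(1)] unfolding distributed_def std_normal_measure_def by simp
  have "integrable (distr PP lborel (\<lambda>z. r * fst z + s * snd z)) g"
    using d assms(3) by simp
  moreover have "(\<lambda>z. r * fst z + s * snd z) \<in> borel_measurable PP" by measurable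
  then have m: "(\<lambda>z. r * fst z + s * snd z) \<in> measurable PP lborel" by simp
  moreover have g': "g \<in> borel_measurable lborel" using assms(2) by simp
  ultimately show ?thesis
    using integrable_distr_eq[OF m g'] by simp
qed

lemma key_X:
  assumes "r\<^sup>2 + s\<^sup>2 = 1"
  shows "integral\<^sup>L PP (\<lambda>z. indicator {a<..} (r * fst z + s * snd z) * fst z) = r * std_normal_density a"
proof -
  interpret Q: pair_prob_space NN NN by (rule PP_pair)
  define f where "f x y = indicator {a<..} (r * x + s * y) * (x::real)" for x y :: real
  have [measurable]: "case_prod f \<in> borel_measurable PP"
    unfolding f_def by measurable
  have int: "integrable PP (case_prod f)"
    by (rule Bochner_Integration.integrable_bound[OF integrable_PP_fst_abs])
       (auto simp: f_def split: split_indicator)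
  have "integral\<^sup>L PP (\<lambda>z. indicator {a<..} (r * fst z + s * snd z) * fst z) = integral\<^sup>L PP (case_prod f)"
    by (rule Bochner_Integration.integral_cong) (auto simp: f_def)
  also have "\<dots> = (\<integral>y. (\<integral>x. f x y \<partial>NN) \<partial>NN)"
    by (rule Q.integral_snd[OF int, symmetric])
  also have "\<dots> = r * std_normal_density a"
  proof (cases "r = 0")
    case True
    have "(\<integral>x. f x y \<partial>NN) = 0" for y
      using NN_x by (simp add: f_def True)
    then show ?thesis using True by simp
  next
    case False
    show ?thesis
    proof (cases "r > 0")
      case True
      have "(\<integral>x. f x y \<partial>NN) = std_normal_density ((a - s * y) / r)" for y
      proof -
        have "(\<lambda>x. f x y) = (\<lambda>x. indicator {(a - s * y) / r<..} x * x)"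
          using True by (auto simp: f_def fun_eq_iff pos_divide_less_eq algebra_simps split: split_indicator)
        then show ?thesis using NN_ind_x by simp
      qed
      then have "(\<integral>y. (\<integral>x. f x y \<partial>NN) \<partial>NN) = \<bar>r\<bar> * std_normal_density a"
        using NN_gauss[OF False assms] by simp
      then show ?thesis using True by simp
    next
      case r: False
      then have rn: "r < 0" using \<open>r \<noteq> 0\<close> by simp
      have "(\<integral>x. f x y \<partial>NN) = - std_normal_density ((a - s * y) / r)" for y
      proof -
        have "(\<lambda>x. f x y) = (\<lambda>x. indicator {..<(a - s * y) / r} x * x)"
          using rn by (auto simp: f_def fun_eq_iff neg_less_divide_eq algebra_simps split: split_indicator)
        then show ?thesis using NN_ind_x_left by simp
      qed
      then have "(\<integral>y. (\<integral>x. f x y \<partial>NN) \<partial>NN) = - (\<bar>r\<bar> * std_normal_density a)"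
        using NN_gauss[OF \<open>r \<noteq> 0\<close> assms] by simp
      then show ?thesis using rn by simp
    qed
  qed
  finally show ?thesis .
qed

lemma E1_integrable:
  "integrable PP (\<lambda>z. indicator {a<..} (fst z) * (c0 + c1 * fst z + c2 * snd z) :: real)"
proof -
  have i1: "integrable PP (\<lambda>z. indicator {a<..} (fst z) * 1 :: real)"
    by (rule prod_integrable[OF integrable_NN_ind integrable_NN_one])
  have i2: "integrable PP (\<lambda>z. (indicator {a<..} (fst z) * fst z) * 1 :: real)"
    by (rule prod_integrable[OF integrable_NN_ind_x integrable_NN_one])
  have i3: "integrable PP (\<lambda>z. indicator {a<..} (fst z) * snd z :: real)"
    by (rule prod_integrable[OF integrable_NN_ind integrable_NN_x])
  have "integrable PP (\<lambda>z. c0 * (indicator {a<..} (fst z) * 1) + c1 * ((indicator {a<..} (fst z) * fst z) * 1)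
      + c2 * (indicator {a<..} (fst z) * snd z) :: real)"
    using i1 i2 i3 by (intro Bochner_Integration.integrable_add integrable_mult_right)
  then show ?thesis by (simp add: algebra_simps)
qed

lemma E1_integral:
  "integral\<^sup>L PP (\<lambda>z. indicator {a<..} (fst z) * (c0 + c1 * fst z + c2 * snd z) :: real)
    = c0 * (1 - Phi a) + c1 * std_normal_density a"
proof -
  have i1: "integrable PP (\<lambda>z. indicator {a<..} (fst z) * 1 :: real)"
    by (rule prod_integrable[OF integrable_NN_ind integrable_NN_one])
  have i2: "integrable PP (\<lambda>z. (indicator {a<..} (fst z) * fst z) * 1 :: real)"
    by (rule prod_integrable[OF integrable_NN_ind_x integrable_NN_one])
  have i3: "integrable PP (\<lambda>z. indicator {a<..} (fst z) * snd z :: real)"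
    by (rule prod_integrable[OF integrable_NN_ind integrable_NN_x])
  have v1: "integral\<^sup>L PP (\<lambda>z. indicator {a<..} (fst z) * 1 :: real) = 1 - Phi a"
    using prod_integral[OF integrable_NN_ind integrable_NN_one] NN_ind NN_one by simp
  have v2: "integral\<^sup>L PP (\<lambda>z. (indicator {a<..} (fst z) * fst z) * 1 :: real) = std_normal_density a"
    using prod_integral[OF integrable_NN_ind_x integrable_NN_one] NN_ind_x NN_one by simp
  have v3: "integral\<^sup>L PP (\<lambda>z. indicator {a<..} (fst z) * snd z :: real) = 0"
    using prod_integral[OF integrable_NN_ind integrable_NN_x] NN_x by simp
  have "integral\<^sup>L PP (\<lambda>z. indicator {a<..} (fst z) * (c0 + c1 * fst z + c2 * snd z) :: real)
     = integral\<^sup>L PP (\<lambda>z. c0 * (indicator {a<..} (fst z) * 1) + c1 * ((indicator {a<..} (fst z) * fst z) * 1)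
      + c2 * (indicator {a<..} (fst z) * snd z) :: real)"
    by (rule Bochner_Integration.integral_cong) (auto simp: algebra_simps)
  also have "\<dots> = c0 * integral\<^sup>L PP (\<lambda>z. indicator {a<..} (fst z) * 1 :: real)
      + c1 * integral\<^sup>L PP (\<lambda>z. (indicator {a<..} (fst z) * fst z) * 1 :: real)
      + c2 * integral\<^sup>L PP (\<lambda>z. indicator {a<..} (fst z) * snd z :: real)"
    using i1 i2 i3
    by (simp add: Bochner_Integration.integral_add Bochner_Integration.integrable_add integrable_mult_right)
  finally show ?thesis using v1 v2 v3 by simp
qed

lemma E2_parts:
  assumes rs: "r\<^sup>2 + s\<^sup>2 = 1"
  shows "integrable PP (\<lambda>z. indicator {a<..} (r * fst z + s * snd z) :: real)"
    and "integrable PP (\<lambda>z. indicator {a<..} (r * fst z + s * snd z) * (r * fst z + s * snd z) :: real)"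
    and "integrable PP (\<lambda>z. indicator {a<..} (r * fst z + s * snd z) * fst z :: real)"
    and "integral\<^sup>L PP (\<lambda>z. indicator {a<..} (r * fst z + s * snd z) :: real) = 1 - Phi a"
    and "integral\<^sup>L PP (\<lambda>z. indicator {a<..} (r * fst z + s * snd z) * (r * fst z + s * snd z) :: real)
          = std_normal_density a"
proof -
  show "integrable PP (\<lambda>z. indicator {a<..} (r * fst z + s * snd z) :: real)"
    using law_W_integrable[OF rs _ integrable_NN_ind] by simp
  show "integrable PP (\<lambda>z. indicator {a<..} (r * fst z + s * snd z) * (r * fst z + s * snd z) :: real)"
    using law_W_integrable[OF rs _ integrable_NN_ind_x] by simp
  show "integrable PP (\<lambda>z. indicator {a<..} (r * fst z + s * snd z) * fst z :: real)"
    by (rule Bochner_Integration.integrable_bound[OF integrable_PP_fst_abs])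
       (auto split: split_indicator)
  show "integral\<^sup>L PP (\<lambda>z. indicator {a<..} (r * fst z + s * snd z) :: real) = 1 - Phi a"
    using law_W_integral[OF rs, of "indicator {a<..}"] NN_ind by simp
  show "integral\<^sup>L PP (\<lambda>z. indicator {a<..} (r * fst z + s * snd z) * (r * fst z + s * snd z) :: real)
          = std_normal_density a"
    using law_W_integral[OF rs, of "\<lambda>x. indicator {a<..} x * x"] NN_ind_x by simp
qed

lemma E2_integrable:
  assumes rs: "r\<^sup>2 + s\<^sup>2 = 1"
  shows "integrable PP (\<lambda>z. indicator {a<..} (r * fst z + s * snd z) *
            (c0 + c1 * fst z + c2 * (r * fst z + s * snd z)) :: real)"
proof -
  note p = E2_parts[OF rs, of a]
  have "integrable PP (\<lambda>z. c0 * indicator {a<..} (r * fst z + s * snd z)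
     + c1 * (indicator {a<..} (r * fst z + s * snd z) * fst z)
     + c2 * (indicator {a<..} (r * fst z + s * snd z) * (r * fst z + s * snd z)) :: real)"
    using p(1-3) by (intro Bochner_Integration.integrable_add integrable_mult_right)
  then show ?thesis by (simp add: algebra_simps)
qed

lemma E2_integral:
  assumes rs: "r\<^sup>2 + s\<^sup>2 = 1"
  shows "integral\<^sup>L PP (\<lambda>z. indicator {a<..} (r * fst z + s * snd z) *
            (c0 + c1 * fst z + c2 * (r * fst z + s * snd z)) :: real)
       = c0 * (1 - Phi a) + c1 * r * std_normal_density a + c2 * std_normal_density a"
proof -
  note p = E2_parts[OF rs, of a]
  have "integral\<^sup>L PP (\<lambda>z. indicator {a<..} (r * fst z + s * snd z) *
            (c0 + c1 * fst z + c2 * (r * fst z + s * snd z)) :: real)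
     = integral\<^sup>L PP (\<lambda>z. c0 * indicator {a<..} (r * fst z + s * snd z)
     + c1 * (indicator {a<..} (r * fst z + s * snd z) * fst z)
     + c2 * (indicator {a<..} (r * fst z + s * snd z) * (r * fst z + s * snd z)) :: real)"
    by (rule Bochner_Integration.integral_cong) (auto simp: algebra_simps)
  also have "\<dots> = c0 * integral\<^sup>L PP (\<lambda>z. indicator {a<..} (r * fst z + s * snd z) :: real)
     + c1 * integral\<^sup>L PP (\<lambda>z. indicator {a<..} (r * fst z + s * snd z) * fst z :: real)
     + c2 * integral\<^sup>L PP (\<lambda>z. indicator {a<..} (r * fst z + s * snd z) * (r * fst z + s * snd z) :: real)"
    using p(1-3)
    by (simp add: Bochner_Integration.integral_add Bochner_Integration.integrable_add integrable_mult_right)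
  finally show ?thesis using p(4,5) key_X[OF rs, of a] by simp
qed

lemma indep_integral:
  fixes X :: "'w \<Rightarrow> real \<times> real" and h :: "real \<times> real \<Rightarrow> real"
  assumes M: "prob_space M" and X[measurable]: "X \<in> borel_measurable M"
    and S[measurable]: "S \<in> sets M"
    and ind: "\<forall>B\<in>sets borel. measure M {w \<in> space M. w \<in> S \<and> X w \<in> B}
                = measure M S * measure M {w \<in> space M. X w \<in> B}"
    and h[measurable]: "h \<in> borel_measurable borel" and hi: "integrable (distr M borel X) h"
  shows "integrable M (\<lambda>w. indicator S w * h (X w))"
    and "integral\<^sup>L M (\<lambda>w. indicator S w * h (X w)) = measure M S * integral\<^sup>L (distr M borel X) h"
proof -
  interpret prob_space M by (rule M)
  have hX: "integrable M (\<lambda>w. h (X w))"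
    using hi by (subst (asm) integrable_distr_eq) auto
  show "integrable M (\<lambda>w. indicator S w * h (X w))"
    using integrable_mult_indicator[OF S hX] by simp
  let ?c = "measure M S"
  let ?L = "distr M borel X"
  have Xd: "X \<in> measurable (density M (\<lambda>w. ennreal (indicator S w :: real))) borel"
    by simp
  have key: "distr (density M (\<lambda>w. ennreal (indicator S w :: real))) borel X = density ?L (\<lambda>_. ennreal ?c)"
  proof (rule measure_eqI)
    show "sets (distr (density M (\<lambda>w. ennreal (indicator S w :: real))) borel X) = sets (density ?L (\<lambda>_. ennreal ?c))"
      by simp
    fix B assume "B \<in> sets (distr (density M (\<lambda>w. ennreal (indicator S w :: real))) borel X)"
    then have B[measurable]: "B \<in> sets borel" by simp
    have "emeasure (distr (density M (\<lambda>w. ennreal (indicator S w :: real))) borel X) B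
        = emeasure (density M (\<lambda>w. ennreal (indicator S w :: real))) (X -` B \<inter> space M)"
      by (subst emeasure_distr) auto
    also have "\<dots> = (\<integral>\<^sup>+ w. ennreal (indicator S w) * indicator (X -` B \<inter> space M) w \<partial>M)"
      by (subst emeasure_density) auto
    also have "\<dots> = (\<integral>\<^sup>+ w. indicator {w \<in> space M. w \<in> S \<and> X w \<in> B} w \<partial>M)"
      by (intro nn_integral_cong) (auto split: split_indicator)
    also have "\<dots> = emeasure M {w \<in> space M. w \<in> S \<and> X w \<in> B}"
      by (subst nn_integral_indicator) auto
    also have "\<dots> = ennreal (?c * measure M {w \<in> space M. X w \<in> B})"
      using ind B by (simp add: emeasure_eq_measure)
    finally have l: "emeasure (distr (density M (\<lambda>w. ennreal (indicator S w :: real))) borel X) B = ennreal (?c * measure M {w \<in> space M. X w \<in> B})" .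
    have "emeasure (density ?L (\<lambda>_. ennreal ?c)) B = (\<integral>\<^sup>+ y. ennreal ?c * indicator B y \<partial>?L)"
      by (subst emeasure_density) auto
    also have "\<dots> = ennreal ?c * emeasure ?L B"
      by (subst nn_integral_cmult_indicator) auto
    also have "emeasure ?L B = emeasure M (X -` B \<inter> space M)"
      by (subst emeasure_distr) auto
    also have "X -` B \<inter> space M = {w \<in> space M. X w \<in> B}" by auto
    also have "ennreal ?c * emeasure M {w \<in> space M. X w \<in> B} = ennreal (?c * measure M {w \<in> space M. X w \<in> B})"
      by (simp add: emeasure_eq_measure ennreal_mult)
    finally show "emeasure (distr (density M (\<lambda>w. ennreal (indicator S w :: real))) borel X) B = emeasure (density ?L (\<lambda>_. ennreal ?c)) B"
      using l by simp
  qed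
  have "integral\<^sup>L M (\<lambda>w. indicator S w * h (X w)) = integral\<^sup>L (density M (\<lambda>w. ennreal (indicator S w :: real))) (\<lambda>w. h (X w))"
    by (subst integral_density) auto
  also have "\<dots> = integral\<^sup>L (distr (density M (\<lambda>w. ennreal (indicator S w :: real))) borel X) h"
    by (subst integral_distr[OF Xd h]) rule
  also have "\<dots> = integral\<^sup>L (density ?L (\<lambda>_. ennreal ?c)) h"
    by (simp only: key)
  also have "\<dots> = integral\<^sup>L ?L (\<lambda>y. ?c * h y)"
    by (subst integral_density) auto
  also have "\<dots> = ?c * integral\<^sup>L ?L h"
    by simp
  finally show "integral\<^sup>L M (\<lambda>w. indicator S w * h (X w)) = ?c * integral\<^sup>L ?L h" .
qed

theorem proposition1:
  fixes M :: "'w measure" and A :: "'w \<Rightarrow> 'b" and u v :: 'b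
    and U V :: "'w \<Rightarrow> real" and p_u p_v mu sd rho :: real
  assumes "prob_space M"
    and "u \<noteq> v"
    and "\<forall>w\<in>space M. A w \<in> {u, v}"
    and "measure M {w \<in> space M. A w = u} = p_u"
    and "measure M {w \<in> space M. A w = v} = p_v"
    and "p_u + p_v = 1"
    and "A \<in> measurable M (count_space UNIV)"
    and "(\<lambda>w. (U w, V w)) \<in> borel_measurable M"
    and "\<forall>x. \<forall>S\<in>sets borel. measure M {w \<in> space M. A w = x \<and> (U w, V w) \<in> S}
           = measure M {w \<in> space M. A w = x} * measure M {w \<in> space M. (U w, V w) \<in> S}"
    and "distr M borel (\<lambda>w. (U w, V w)) = bivariate_normal_law mu sd rho"
    and "mu < 0" and "sd > 0" and "rho \<le> 1"
    and "-1 \<le> rho"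
    and "rho < 2 * (- mu / sd) * mills_ratio (- mu / sd) - 1"
  shows "prob_space.expectation M
           (\<lambda>w. ((if A w = u \<and> U w > 0 then 1 else 0) + (if A w = v \<and> V w > 0 then 1 else 0))
                 * (U w + V w)) < 0"
proof -
  note asm = assms
  interpret prob_space M by (rule asm(1))
  define X where "X w = (U w, V w)" for w
  have Xm[measurable]: "X \<in> borel_measurable M" using asm(8) unfolding X_def by simp
  define a where "a = - mu / sd"
  define s where "s = sqrt (1 - rho\<^sup>2)"
  have r2: "rho\<^sup>2 \<le> 1" using asm(13,14) by (simp add: abs_square_le_1)
  have rs: "rho\<^sup>2 + s\<^sup>2 = 1" using r2 unfolding s_def by simp
  define F where "F = (\<lambda>(z1::real, z2::real). (mu + sd * z1, mu + sd * (rho * z1 + sqrt (1 - rho\<^sup>2) * z2)))"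
  have Fm[measurable]: "F \<in> borel_measurable PP" unfolding F_def by measurable
  have L: "distr M borel X = distr PP borel F"
    using asm(10) unfolding X_def F_def bivariate_normal_law_def by simp
  define h1 where "h1 p = (if fst p > 0 then fst p + snd p else 0)" for p :: "real \<times> real"
  define h2 where "h2 p = (if snd p > 0 then fst p + snd p else 0)" for p :: "real \<times> real"
  have h1m[measurable]: "h1 \<in> borel_measurable borel" unfolding h1_def borel_prod[symmetric] by measurable
  have h2m[measurable]: "h2 \<in> borel_measurable borel" unfolding h2_def borel_prod[symmetric] by measurable
  have sda: "sd * a = - mu" unfolding a_def using asm(12) by simp
  have gt: "mu + sd * t > 0 \<longleftrightarrow> a < t" for t
  proof -
    have "a < t \<longleftrightarrow> sd * a < sd * t" using asm(12) by simp
    then show ?thesis using sda by linarith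
  qed
  have hF1: "h1 (F z) = indicator {a<..} (fst z) * (2 * mu + (sd * (1 + rho)) * fst z + (sd * s) * snd z)" for z
    using gt[of "fst z"] by (cases z) (auto simp: h1_def F_def s_def algebra_simps split: split_indicator)
  have hF2: "h2 (F z) = indicator {a<..} (rho * fst z + s * snd z) *
       (2 * mu + sd * fst z + sd * (rho * fst z + s * snd z))" for z
    using gt[of "rho * fst z + s * snd z"] by (cases z) (auto simp: h2_def F_def s_def algebra_simps split: split_indicator)
  define T where "T = 2 * mu * (1 - Phi a) + sd * (1 + rho) * std_normal_density a"
  have int1: "integrable PP (\<lambda>z. h1 (F z))"
    unfolding hF1 by (rule E1_integrable)
  have int2: "integrable PP (\<lambda>z. h2 (F z))"
    unfolding hF2 by (rule E2_integrable[OF rs])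
  have val1: "integral\<^sup>L PP (\<lambda>z. h1 (F z)) = T"
    unfolding hF1 E1_integral T_def by simp
  have val2: "integral\<^sup>L PP (\<lambda>z. h2 (F z)) = T"
    unfolding hF2 E2_integral[OF rs] T_def by (simp add: algebra_simps)
  have Li1: "integrable (distr M borel X) h1"
    unfolding L using int1 by (subst integrable_distr_eq) auto
  have Li2: "integrable (distr M borel X) h2"
    unfolding L using int2 by (subst integrable_distr_eq) auto
  have Lv1: "integral\<^sup>L (distr M borel X) h1 = T"
    unfolding L using val1 by (subst integral_distr) auto
  have Lv2: "integral\<^sup>L (distr M borel X) h2 = T"
    unfolding L using val2 by (subst integral_distr) auto
  define Su where "Su = {w \<in> space M. A w = u}"
  define Sv where "Sv = {w \<in> space M. A w = v}"
  have Sum: "Su \<in> sets M"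
  proof -
    have "A -` {u} \<inter> space M \<in> sets M" by (rule measurable_sets[OF asm(7)]) simp
    moreover have "A -` {u} \<inter> space M = Su" unfolding Su_def by auto
    ultimately show ?thesis by simp
  qed
  have Svm: "Sv \<in> sets M"
  proof -
    have "A -` {v} \<inter> space M \<in> sets M" by (rule measurable_sets[OF asm(7)]) simp
    moreover have "A -` {v} \<inter> space M = Sv" unfolding Sv_def by auto
    ultimately show ?thesis by simp
  qed
  have indu: "\<forall>B\<in>sets borel. measure M {w \<in> space M. w \<in> Su \<and> X w \<in> B}
                = measure M Su * measure M {w \<in> space M. X w \<in> B}"
  proof
    fix B :: "(real \<times> real) set" assume "B \<in> sets borel"
    then have B: "B \<in> sets borel" .
    have e1: "{w \<in> space M. w \<in> Su \<and> X w \<in> B} = {w \<in> space M. A w = u \<and> (U w, V w) \<in> B}"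
      by (auto simp: Su_def X_def)
    have e2: "{w \<in> space M. X w \<in> B} = {w \<in> space M. (U w, V w) \<in> B}"
      by (simp add: X_def)
    show "measure M {w \<in> space M. w \<in> Su \<and> X w \<in> B} = measure M Su * measure M {w \<in> space M. X w \<in> B}"
      unfolding e1 e2 unfolding Su_def by (rule asm(9)[rule_format, OF B])
  qed
  have indv: "\<forall>B\<in>sets borel. measure M {w \<in> space M. w \<in> Sv \<and> X w \<in> B}
                = measure M Sv * measure M {w \<in> space M. X w \<in> B}"
  proof
    fix B :: "(real \<times> real) set" assume "B \<in> sets borel"
    then have B: "B \<in> sets borel" .
    have e1: "{w \<in> space M. w \<in> Sv \<and> X w \<in> B} = {w \<in> space M. A w = v \<and> (U w, V w) \<in> B}"
      by (auto simp: Sv_def X_def)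
    have e2: "{w \<in> space M. X w \<in> B} = {w \<in> space M. (U w, V w) \<in> B}"
      by (simp add: X_def)
    show "measure M {w \<in> space M. w \<in> Sv \<and> X w \<in> B} = measure M Sv * measure M {w \<in> space M. X w \<in> B}"
      unfolding e1 e2 unfolding Sv_def by (rule asm(9)[rule_format, OF B])
  qed
  note I1 = indep_integral[OF asm(1) Xm Sum indu h1m Li1]
  note I2 = indep_integral[OF asm(1) Xm Svm indv h2m Li2]
  have "expectation (\<lambda>w. ((if A w = u \<and> U w > 0 then 1 else 0) + (if A w = v \<and> V w > 0 then 1 else 0))
                 * (U w + V w))
      = expectation (\<lambda>w. indicator Su w * h1 (X w) + indicator Sv w * h2 (X w))"
  proof (rule Bochner_Integration.integral_cong)
    fix w assume w: "w \<in> space M"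
    then have "A w = u \<or> A w = v" using asm(3) by auto
    then show "((if A w = u \<and> U w > 0 then 1 else 0) + (if A w = v \<and> V w > 0 then 1 else 0)) * (U w + V w)
        = indicator Su w * h1 (X w) + indicator Sv w * h2 (X w)"
      using w asm(2) by (auto simp: Su_def Sv_def X_def h1_def h2_def split: split_indicator)
  qed simp
  also have "\<dots> = measure M Su * T + measure M Sv * T"
    using I1 I2 Lv1 Lv2 by (simp add: Bochner_Integration.integral_add)
  also have "\<dots> = T"
  proof -
    have "measure M Su * T + measure M Sv * T = (p_u + p_v) * T"
      using asm(4,5) unfolding Su_def Sv_def by (simp add: algebra_simps)
    then show ?thesis using asm(6) by simp
  qed
  also have "T < 0"
  proof -
    have pa: "std_normal_density a > 0" by (simp add: normal_density_pos)
    have "rho + 1 < 2 * a * ((1 - Phi a) / std_normal_density a)"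
      using asm(15) unfolding a_def mills_ratio_def by simp
    then have "(1 + rho) * std_normal_density a < 2 * a * (1 - Phi a)"
      using pa by (simp add: field_simps)
    then have "sd * ((1 + rho) * std_normal_density a) < sd * (2 * a * (1 - Phi a))"
      using asm(12) by simp
    also have "sd * (2 * a * (1 - Phi a)) = 2 * (1 - Phi a) * (sd * a)"
      by (simp add: algebra_simps)
    also have "\<dots> = - 2 * mu * (1 - Phi a)"
      by (simp add: sda)
    finally show ?thesis unfolding T_def by (simp add: algebra_simps)
  qed
  finally show ?thesis .
qed

end
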